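(* Let $\kappa=4$. For each of the rooted trees $((a,b),c)$, $((a,c),b)$, $((b,c),a)$, consider the polynomials of the corresponding form: for $((a,b),c)$ (indices ordered $a,b,c$) these are the entries of $$P_{+\cdot\cdot}\operatorname{Cof}(P_{\cdot+\cdot})^TP_{\cdot\cdot k}-P_{\cdot\cdot k}^T\operatorname{Cof}(P_{\cdot+\cdot})P_{+\cdot\cdot}^T,\qquad P_{\cdot\cdot k}\operatorname{Cof}(P_{+\cdot\cdot})P_{\cdot+\cdot}^T-P_{\cdot+\cdot}\operatorname{Cof}(P_{+\cdot\cdot})^TP_{\cdot\cdot k}^T,\quad k\in[4],$$ and for the other two trees the analogous polynomials obtained by permuting the roles of the taxa so that the cherry taxa play the roles of $a,b$ and the remaining taxon the role of $c$. Then all of these polynomials, for all three trees, vanish on every probability tensor $P$ arising from the CK Jukes–Cantor model on any of the three rooted trees with any edge lengths.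
   Context: For a 3-way tensor $P=(p_{ijk})$ with indices ordered $a,b,c$: $P_{+\cdot\cdot}$ has $(j,k)$-entry $\sum_ip_{ijk}$; $P_{\cdot+\cdot}$ has $(i,k)$-entry $\sum_jp_{ijk}$; $P_{\cdot\cdot k}$ has $(i,j)$-entry $p_{ijk}$; $^T$ is transpose; $\operatorname{Cof}(A)$ is the matrix of cofactors of $A$. CK Jukes–Cantor model on a rooted species tree with edge lengths (not necessarily ultrametric): with constant population size, a gene tree with one lineage per taxon is drawn under the multispecies coalescent, and a site evolves on it under the 4-state Jukes–Cantor process (equal off-diagonal rates, uniform stationary distribution) from the uniform root distribution, with a fixed scalar mutation rate; the site pattern distribution is the mixture over gene trees. *)

theory Defs
  imports "HOL-Analysis.Analysis" "HOL-Library.Numeral_Type"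
begin

text \<open>Matrix of cofactors: the (i,j) entry is the (i,j) cofactor of A, i.e. the
  determinant of A with row i replaced by the j-th unit row vector
  (Laplace expansion along row i shows this equals (-1)^(i+j) times the (i,j) minor).\<close>
definition cofactor_matrix :: "real^'n^'n \<Rightarrow> real^'n^'n" where
  "cofactor_matrix A = (\<chi> i j. det (\<chi> k l. if k = i then (if l = j then 1 else 0) else A $ k $ l))"

text \<open>3-way tensors over the 4 DNA states, indices ordered (a,b,c).\<close>
type_synonym tensor3 = "4 \<Rightarrow> 4 \<Rightarrow> 4 \<Rightarrow> real"

definition marg1 :: "tensor3 \<Rightarrow> real^4^4" where
  "marg1 P = (\<chi> j k. \<Sum>i\<in>UNIV. P i j k)"

definition marg2 :: "tensor3 \<Rightarrow> real^4^4" where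
  "marg2 P = (\<chi> i k. \<Sum>j\<in>UNIV. P i j k)"

definition slice3 :: "tensor3 \<Rightarrow> 4 \<Rightarrow> real^4^4" where
  "slice3 P k = (\<chi> i j. P i j k)"

definition polyA :: "tensor3 \<Rightarrow> 4 \<Rightarrow> real^4^4" where
  "polyA P k = marg1 P ** transpose (cofactor_matrix (marg2 P)) ** slice3 P k
             - transpose (slice3 P k) ** cofactor_matrix (marg2 P) ** transpose (marg1 P)"

definition polyB :: "tensor3 \<Rightarrow> 4 \<Rightarrow> real^4^4" where
  "polyB P k = slice3 P k ** cofactor_matrix (marg1 P) ** transpose (marg2 P)
             - marg2 P ** transpose (cofactor_matrix (marg1 P)) ** transpose (slice3 P k)"

datatype rtree3 = AB_C | AC_B | BC_A

text \<open>Reindex a tensor (indices a,b,c) so that the cherry taxa of the tree come first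
  and the remaining taxon last.\<close>
fun relabel :: "rtree3 \<Rightarrow> tensor3 \<Rightarrow> tensor3" where
  "relabel AB_C P = P"
| "relabel AC_B P = (\<lambda>x y z. P x z y)"
| "relabel BC_A P = (\<lambda>x y z. P z x y)"

text \<open>Jukes-Cantor transition probabilities: rate matrix with all off-diagonal rates
  equal to the mutation rate mu, time t; entries of exp(t Q).\<close>
definition jc :: "real \<Rightarrow> real \<Rightarrow> 4 \<Rightarrow> 4 \<Rightarrow> real" where
  "jc mu t r s = (if r = s then 1/4 + 3/4 * exp (-4 * mu * t) else 1/4 - 1/4 * exp (-4 * mu * t))"

text \<open>Site pattern distribution for a rooted gene tree ((X,Y),Z) with branch lengths
  lx, ly (pendant to X, Y), li (internal), lz (root to Z), uniform root distribution;
  the arguments x y z are the states at X, Y, Z.\<close>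
definition gtree :: "real \<Rightarrow> real \<Rightarrow> real \<Rightarrow> real \<Rightarrow> real \<Rightarrow> 4 \<Rightarrow> 4 \<Rightarrow> 4 \<Rightarrow> real" where
  "gtree mu lx ly li lz x y z =
     (\<Sum>r\<in>UNIV. \<Sum>s\<in>UNIV. (1/4) * jc mu lz r z * jc mu li r s * jc mu lx s x * jc mu ly s y)"

text \<open>CK distribution on the species tree ((X,Y),Z): pendant edge lengths tx, ty (to the
  cherry node), tz (from the root to Z), internal edge length l (coalescent units, constant
  population size). Mixture over gene trees under the multispecies coalescent:
  either X,Y coalesce in the internal edge at time u (density e^-u on [0,l]) and then with Z
  in the root population at time w (density e^-w), or no coalescence in the internal edge
  (prob. e^-l), then the first coalescence in the root population at time w1 (density 3 e^-3w1)
  of a uniformly random pair, followed by the last one after time w2 (density e^-w2).\<close>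
definition ck :: "real \<Rightarrow> real \<Rightarrow> real \<Rightarrow> real \<Rightarrow> real \<Rightarrow> tensor3" where
  "ck mu tx ty tz l x y z =
     (LBINT u:{0..l}. exp (- u) *
        (LBINT w:{0..}. exp (- w) * gtree mu (tx + u) (ty + u) (l - u + w) (tz + w) x y z))
   + exp (- l) *
     (LBINT w1:{0..}. 3 * exp (- 3 * w1) *
        (LBINT w2:{0..}. exp (- w2) * (1/3) *
           (  gtree mu (tx + l + w1) (ty + l + w1) w2 (tz + w1 + w2) x y z
            + gtree mu (tx + l + w1) (tz + w1) w2 (ty + l + w1 + w2) x z y
            + gtree mu (ty + l + w1) (tz + w1) w2 (tx + l + w1 + w2) y z x)))"

fun ck_model :: "rtree3 \<Rightarrow> real \<Rightarrow> real \<Rightarrow> real \<Rightarrow> real \<Rightarrow> real \<Rightarrow> tensor3" where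
  "ck_model AB_C mu ta tb tc l = ck mu ta tb tc l"
| "ck_model AC_B mu ta tb tc l = (\<lambda>i j k. ck mu ta tc tb l i k j)"
| "ck_model BC_A mu ta tb tc l = (\<lambda>i j k. ck mu tb tc ta l j k i)"

end

theory Submission
  imports Defs
begin

lemma det_4: "det (A::'a::comm_ring_1^4^4) = A$1$1*A$2$2*A$3$3*A$4$4 - A$1$1*A$2$2*A$3$4*A$4$3 - A$1$1*A$2$3*A$3$2*A$4$4 + A$1$1*A$2$3*A$3$4*A$4$2 + A$1$1*A$2$4*A$3$2*A$4$3 - A$1$1*A$2$4*A$3$3*A$4$2 - A$1$2*A$2$1*A$3$3*A$4$4 + A$1$2*A$2$1*A$3$4*A$4$3 + A$1$2*A$2$3*A$3$1*A$4$4 - A$1$2*A$2$3*A$3$4*A$4$1 - A$1$2*A$2$4*A$3$1*A$4$3 + A$1$2*A$2$4*A$3$3*A$4$1 + A$1$3*A$2$1*A$3$2*A$4$4 - A$1$3*A$2$1*A$3$4*A$4$2 - A$1$3*A$2$2*A$3$1*A$4$4 + A$1$3*A$2$2*A$3$4*A$4$1 + A$1$3*A$2$4*A$3$1*A$4$2 - A$1$3*A$2$4*A$3$2*A$4$1 - A$1$4*A$2$1*A$3$2*A$4$3 + A$1$4*A$2$1*A$3$3*A$4$2 + A$1$4*A$2$2*A$3$1*A$4$3 - A$1$4*A$2$2*A$3$3*A$4$1 - A$1$4*A$2$3*A$3$1*A$4$2 + A$1$4*A$2$3*A$3$2*A$4$1"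
proof -
  have f1: "finite {2::4, 3, 4}" "1 \<notin> {2::4, 3, 4}" by auto
  have f2: "finite {3::4, 4}" "2 \<notin> {3::4, 4}" by auto
  have f3: "finite {4::4}" "3 \<notin> {4::4}" by auto
  show ?thesis
    unfolding det_def UNIV_4
    unfolding sum_over_permutations_insert[OF f1]
    unfolding sum_over_permutations_insert[OF f2]
    unfolding sum_over_permutations_insert[OF f3]
    unfolding permutes_sing
    by (simp add: sign_swap_id permutation_swap_id sign_compose sign_id swap_id_eq permutation_compose algebra_simps)
qed

lemma cof_special: "cofactor_matrix (\<chi> i j. if i=j then a else b :: real^4^4) = (\<chi> i j. if i=j then (a-b)^2*(a+2*b) else -((a-b)^2*b))"
  unfolding cofactor_matrix_def vec_eq_iff forall_4 det_4
  by (simp add: power2_eq_square algebra_simps)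

definition patt :: "real \<Rightarrow> real \<Rightarrow> real \<Rightarrow> real \<Rightarrow> real \<Rightarrow> tensor3" where
 "patt p1 p2 p3 p4 p5 x y z = (if x=y \<and> y=z then p1 else if x=y then p2 else if x=z then p3 else if y=z then p4 else p5)"

lemma marg1_patt: "marg1 (patt p1 p2 p3 p4 p5) = (\<chi> i j. if i=j then p1+3*p4 else p2+p3+2*p5)"
  unfolding marg1_def vec_eq_iff forall_4 sum_4 patt_def by simp
lemma marg2_patt: "marg2 (patt p1 p2 p3 p4 p5) = (\<chi> i j. if i=j then p1+3*p3 else p2+p4+2*p5)"
  unfolding marg2_def vec_eq_iff forall_4 sum_4 patt_def by simp


lemma mult_special: "(\<chi> i j. if i=j then a else b :: real^4^4) ** (\<chi> i j. if i=j then c else d) = (\<chi> i j. if i=j then a*c+3*b*d else a*d+b*c+2*b*d)"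
  unfolding vec_eq_iff forall_4 matrix_matrix_mult_def sum_4 by simp
lemma transp_special: "transpose (\<chi> i j. if i=j then a else b :: real^4^4) = (\<chi> i j. if i=j then a else b)"
  unfolding vec_eq_iff forall_4 transpose_def by auto


definition spec :: "real \<Rightarrow> real \<Rightarrow> real^4^4" where
  "spec a b = (\<chi> i j. if i=j then a else b)"

lemma spec_mult: "spec a b ** spec c d = spec (a*c+3*b*d) (a*d+b*c+2*b*d)"
  unfolding spec_def by (rule mult_special)
lemma spec_comm: "spec a b ** spec c d = spec c d ** spec a b"
  unfolding spec_mult by (simp add: algebra_simps)
lemma spec_transp: "transpose (spec a b) = spec a b"
  unfolding spec_def by (rule transp_special)

lemma spec_sum: "(\<Sum>m\<in>UNIV. (spec dd ee)$i$m * S$m$j) = ee*(\<Sum>m\<in>UNIV. S$m$j) + (dd-ee)*S$i$j"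
  using exhaust_4[of i] unfolding spec_def sum_4 by (auto simp: algebra_simps)
lemma spec_sum2: "(\<Sum>m\<in>UNIV. S$m$i * (spec dd ee)$m$j) = ee*(\<Sum>m\<in>UNIV. S$m$i) + (dd-ee)*S$j$i"
  using exhaust_4[of j] unfolding spec_def sum_4 by (auto simp: algebra_simps)

lemma spec_sum': "(\<Sum>m\<in>UNIV. S$m$j * (spec dd ee)$i$m) = ee*(\<Sum>m\<in>UNIV. S$m$j) + (dd-ee)*S$i$j"
  using spec_sum[of dd ee i S j] by (simp add: mult.commute)
lemma spec_comm_entry: "(spec dd ee ** S - transpose S ** spec dd ee) $ i $ j
   = (dd-ee)*(S$i$j - S$j$i) + ee*((\<Sum>m\<in>UNIV. S$m$j) - (\<Sum>m\<in>UNIV. S$m$i))"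
  unfolding matrix_matrix_mult_def transpose_def
  by (simp add: spec_sum' spec_sum2 algebra_simps)

lemma polyA_spec:
  assumes "marg1 P = spec a1 b1" "marg2 P = spec a2 b2"
  shows "polyA P k = spec a1 b1 ** spec ((a2-b2)^2*(a2+2*b2)) (-((a2-b2)^2*b2)) ** slice3 P k
     - transpose (slice3 P k) ** (spec a1 b1 ** spec ((a2-b2)^2*(a2+2*b2)) (-((a2-b2)^2*b2)))"
proof -
  have c: "cofactor_matrix (spec a2 b2) = spec ((a2-b2)^2*(a2+2*b2)) (-((a2-b2)^2*b2))"
    unfolding spec_def by (rule cof_special)
  show ?thesis unfolding polyA_def assms c spec_transp
    by (simp add: matrix_mul_assoc) (metis matrix_mul_assoc spec_comm)
qed

lemma polyB_spec:
  assumes "marg1 P = spec a1 b1" "marg2 P = spec a2 b2"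
  shows "polyB P k = slice3 P k ** (spec ((a1-b1)^2*(a1+2*b1)) (-((a1-b1)^2*b1)) ** spec a2 b2)
     - (spec ((a1-b1)^2*(a1+2*b1)) (-((a1-b1)^2*b1)) ** spec a2 b2) ** transpose (slice3 P k)"
proof -
  have c: "cofactor_matrix (spec a1 b1) = spec ((a1-b1)^2*(a1+2*b1)) (-((a1-b1)^2*b1))"
    unfolding spec_def by (rule cof_special)
  show ?thesis unfolding polyB_def assms c spec_transp
    by (simp add: matrix_mul_assoc) (metis matrix_mul_assoc spec_comm)
qed


lemma key_id:
  fixes p1 p2 p3 p4 p5 :: real
  defines "a1 \<equiv> p1+3*p4" and "b1 \<equiv> p2+p3+2*p5" and "a2 \<equiv> p1+3*p3" and "b2 \<equiv> p2+p4+2*p5"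
  defines "c \<equiv> (a2-b2)^2*(a2+2*b2)" and "d \<equiv> -((a2-b2)^2*b2)"
  shows "((a1*c+3*b1*d) - (a1*d+b1*c+2*b1*d))*(p3-p4) + (a1*d+b1*c+2*b1*d)*(b1-a1) = 0"
proof -
  have h1: "b1*a2 - a1*b2 = (p3-p4)*(a2+3*b2)" unfolding a1_def b1_def a2_def b2_def by (simp add: algebra_simps)
  have h2: "a1*d+b1*c+2*b1*d = (a2-b2)^2*(b1*a2 - a1*b2)" unfolding c_def d_def by (simp add: algebra_simps)
  have h3: "(a1*c+3*b1*d) - (a1*d+b1*c+2*b1*d) = (a1-b1)*(a2-b2)^2*(a2+3*b2)" unfolding c_def d_def by (simp add: algebra_simps)
  show ?thesis by (subst h3, subst h2, subst h1) (simp add: algebra_simps)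
qed

lemma polyA_patt: "polyA (patt p1 p2 p3 p4 p5) k = 0"
proof -
  define P where "P = patt p1 p2 p3 p4 p5"
  define a1 where "a1 = p1+3*p4"
  define b1 where "b1 = p2+p3+2*p5"
  define a2 where "a2 = p1+3*p3"
  define b2 where "b2 = p2+p4+2*p5"
  define c where "c = (a2-b2)^2*(a2+2*b2)"
  define d where "d = -((a2-b2)^2*b2)"
  define dd where "dd = a1*c+3*b1*d"
  define ee where "ee = a1*d+b1*c+2*b1*d"
  have K: "(dd - ee)*(p3-p4) + ee*(b1-a1) = 0"
    unfolding dd_def ee_def c_def d_def a1_def b1_def a2_def b2_def by (rule key_id)
  have m1: "marg1 P = spec a1 b1" unfolding P_def marg1_patt spec_def a1_def b1_def ..
  have m2: "marg2 P = spec a2 b2" unfolding P_def marg2_patt spec_def a2_def b2_def ..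
  define S where "S = slice3 P k"
  have cs: "(\<Sum>m\<in>UNIV. S$m$j) = (if j = k then a1 else b1)" for j
  proof -
    have "(\<Sum>m\<in>UNIV. S$m$j) = marg1 P $ j $ k" unfolding S_def slice3_def marg1_def by simp
    then show ?thesis unfolding m1 spec_def by simp
  qed
  have Sij: "S$i$j = patt p1 p2 p3 p4 p5 i j k" for i j unfolding S_def slice3_def P_def by simp
  have e: "polyA P k = spec dd ee ** S - transpose S ** spec dd ee"
    unfolding polyA_spec[OF m1 m2] S_def c_def d_def spec_mult dd_def ee_def ..
  have "(polyA P k) $ i $ j = 0" for i j
  proof -
    have E: "(polyA P k) $ i $ j = (dd-ee)*(S$i$j - S$j$i) + ee*((if j = k then a1 else b1) - (if i = k then a1 else b1))"
      unfolding e spec_comm_entry cs ..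
    consider "i = j" | "i \<noteq> j" "i = k" | "i \<noteq> j" "j = k" | "i \<noteq> j" "i \<noteq> k" "j \<noteq> k" by blast
    then show ?thesis
    proof cases
      case 1 then show ?thesis unfolding E by simp
    next
      case 2 then show ?thesis unfolding E Sij using K by (simp add: patt_def)
    next
      case 3
      then have "(polyA P k) $ i $ j = -((dd - ee)*(p3-p4) + ee*(b1-a1))"
        unfolding E Sij by (auto simp: patt_def algebra_simps)
      then show ?thesis using K by simp
    next
      case 4 then show ?thesis unfolding E Sij by (simp add: patt_def)
    qed
  qed
  then show ?thesis unfolding P_def by (simp add: vec_eq_iff)
qed

lemma polyB_patt: "polyB (patt p1 p2 p3 p4 p5) k = 0"
proof -
  define P where "P = patt p1 p2 p3 p4 p5"
  define a1 where "a1 = p1+3*p4"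
  define b1 where "b1 = p2+p3+2*p5"
  define a2 where "a2 = p1+3*p3"
  define b2 where "b2 = p2+p4+2*p5"
  define c where "c = (a1-b1)^2*(a1+2*b1)"
  define d where "d = -((a1-b1)^2*b1)"
  define dd where "dd = c*a2+3*d*b2"
  define ee where "ee = c*b2+d*a2+2*d*b2"
  have K0: "((a2*c+3*b2*d) - (a2*d+b2*c+2*b2*d))*(p4-p3) + (a2*d+b2*c+2*b2*d)*(b2-a2) = 0"
    unfolding c_def d_def a1_def b1_def a2_def b2_def by (rule key_id)
  have K: "(dd - ee)*(p4-p3) + ee*(b2-a2) = 0"
    using K0 unfolding dd_def ee_def by (simp add: algebra_simps)
  have m1: "marg1 P = spec a1 b1" unfolding P_def marg1_patt spec_def a1_def b1_def ..
  have m2: "marg2 P = spec a2 b2" unfolding P_def marg2_patt spec_def a2_def b2_def ..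
  define T where "T = transpose (slice3 P k)"
  have cs: "(\<Sum>m\<in>UNIV. T$m$j) = (if j = k then a2 else b2)" for j
  proof -
    have "(\<Sum>m\<in>UNIV. T$m$j) = marg2 P $ j $ k" unfolding T_def slice3_def marg2_def transpose_def by simp
    then show ?thesis unfolding m2 spec_def by simp
  qed
  have Tij: "T$i$j = patt p1 p2 p3 p4 p5 j i k" for i j unfolding T_def slice3_def P_def transpose_def by simp
  have e: "polyB P k = - (spec dd ee ** T - transpose T ** spec dd ee)"
    unfolding polyB_spec[OF m1 m2] T_def c_def d_def spec_mult dd_def ee_def transpose_transpose
    by simp
  have "(polyB P k) $ i $ j = 0" for i j
  proof -
    have E: "(polyB P k) $ i $ j = - ((dd-ee)*(T$i$j - T$j$i) + ee*((if j = k then a2 else b2) - (if i = k then a2 else b2)))"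
      unfolding e vector_uminus_component spec_comm_entry cs ..
    consider "i = j" | "i \<noteq> j" "i = k" | "i \<noteq> j" "j = k" | "i \<noteq> j" "i \<noteq> k" "j \<noteq> k" by blast
    then show ?thesis
    proof cases
      case 1 then show ?thesis unfolding E by simp
    next
      case 2 then show ?thesis unfolding E Tij using K by (simp add: patt_def)
    next
      case 3
      then have "(polyB P k) $ i $ j = ((dd - ee)*(p4-p3) + ee*(b2-a2))"
        unfolding E Tij by (auto simp: patt_def algebra_simps)
      then show ?thesis using K by simp
    next
      case 4 then show ?thesis unfolding E Tij by (simp add: patt_def)
    qed
  qed
  then show ?thesis unfolding P_def by (simp add: vec_eq_iff)
qed

definition sw :: "4 \<Rightarrow> 4 \<Rightarrow> 4 \<Rightarrow> 4" where
  "sw a b x = (if x = a then b else if x = b then a else x)"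

lemma sw_a [simp]: "sw a b a = b" by (simp add: sw_def)
lemma sw_b [simp]: "sw a b b = a" by (simp add: sw_def)
lemma sw_other: "x \<noteq> a \<Longrightarrow> x \<noteq> b \<Longrightarrow> sw a b x = x" by (simp add: sw_def)
lemma sw_sw [simp]: "sw a b (sw a b x) = x" by (simp add: sw_def)
lemma sw_inj [simp]: "(sw a b x = sw a b y) = (x = y)" by (metis sw_sw)

lemma sum_sw: "(\<Sum>r\<in>UNIV. f (sw a b r)) = (\<Sum>r\<in>UNIV. (f r :: real))"
  by (rule sum.reindex_bij_witness[of _ "sw a b" "sw a b"]) auto

lemma jc_sw [simp]: "jc mu t (sw a b r) (sw a b s) = jc mu t r s"
  unfolding jc_def by simp

lemma sum2_sw: "(\<Sum>r\<in>UNIV. \<Sum>s\<in>UNIV. F (sw a b r) (sw a b s)) = (\<Sum>r\<in>UNIV. \<Sum>s\<in>UNIV. (F r s::real))"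
proof -
  have "(\<Sum>s\<in>UNIV. F (sw a b r) (sw a b s)) = (\<Sum>s\<in>UNIV. F (sw a b r) s)" for r
    by (rule sum_sw[of "F (sw a b r)"])
  then have "(\<Sum>r\<in>UNIV. \<Sum>s\<in>UNIV. F (sw a b r) (sw a b s)) = (\<Sum>r\<in>UNIV. \<Sum>s\<in>UNIV. F (sw a b r) s)"
    by simp
  also have "\<dots> = (\<Sum>r\<in>UNIV. \<Sum>s\<in>UNIV. F r s)"
    by (rule sum_sw[of "\<lambda>r. \<Sum>s\<in>UNIV. F r s"])
  finally show ?thesis .
qed

lemma gtree_sw [simp]: "gtree mu lx ly li lz (sw a b x) (sw a b y) (sw a b z) = gtree mu lx ly li lz x y z"
proof -
  define F where "F r s = (1/4) * jc mu lz r (sw a b z) * jc mu li r s * jc mu lx s (sw a b x) * jc mu ly s (sw a b y)" for r s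
  have "gtree mu lx ly li lz (sw a b x) (sw a b y) (sw a b z) = (\<Sum>r\<in>UNIV. \<Sum>s\<in>UNIV. F r s)"
    unfolding gtree_def F_def ..
  also have "\<dots> = (\<Sum>r\<in>UNIV. \<Sum>s\<in>UNIV. F (sw a b r) (sw a b s))" by (rule sum2_sw[symmetric])
  also have "\<dots> = gtree mu lx ly li lz x y z" unfolding F_def gtree_def by simp
  finally show ?thesis .
qed

lemma ck_sw [simp]: "ck mu tx ty tz l (sw a b x) (sw a b y) (sw a b z) = ck mu tx ty tz l x y z"
  unfolding ck_def by simp

definition inv4 :: "tensor3 \<Rightarrow> bool" where
  "inv4 P = (\<forall>a b x y z. P (sw a b x) (sw a b y) (sw a b z) = P x y z)"

lemma inv_ck_model: "inv4 (ck_model T mu ta tb tc l)"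
  by (cases T) (simp_all add: inv4_def)

lemma inv_relabel: "inv4 P \<Longrightarrow> inv4 (relabel T' P)"
  by (cases T') (simp_all add: inv4_def)

lemma inv_step: "inv4 P \<Longrightarrow> P x y z = P (sw a b x) (sw a b y) (sw a b z)"
  by (simp add: inv4_def)

lemma inv_patt:
  assumes I: "inv4 P"
  shows "P = patt (P 1 1 1) (P 1 1 2) (P 1 2 1) (P 2 1 1) (P 1 2 3)"
proof (intro ext)
  fix x y z :: 4
  have n12: "(1::4) \<noteq> 2" "(1::4) \<noteq> 3" "(2::4) \<noteq> 3" by simp_all
  show "P x y z = patt (P 1 1 1) (P 1 1 2) (P 1 2 1) (P 2 1 1) (P 1 2 3) x y z"
  proof (cases "x = y \<and> y = z")
    case True
    then show ?thesis using inv_step[OF I, of x x x x 1] by (simp add: patt_def)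
  next
    case F1: False
    show ?thesis
    proof (cases "x = y")
      case True
      with F1 have yz: "y \<noteq> z" by auto
      define z1 where "z1 = sw x 1 z"
      have z1: "z1 \<noteq> 1" unfolding z1_def using True yz by (metis sw_a sw_inj)
      have "P x y z = P 1 1 z1" using inv_step[OF I, of x y z x 1] True by (simp add: z1_def)
      also have "\<dots> = P 1 1 2" using inv_step[OF I, of 1 1 z1 z1 2] z1 n12 by (simp add: sw_other)
      finally show ?thesis using True yz by (simp add: patt_def)
    next
      case xy: False
      show ?thesis
      proof (cases "x = z")
        case True
        define y1 where "y1 = sw x 1 y"
        have y1: "y1 \<noteq> 1" unfolding y1_def using xy by (metis sw_a sw_inj)
        have "P x y z = P 1 y1 1" using inv_step[OF I, of x y z x 1] True by (simp add: y1_def)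
        also have "\<dots> = P 1 2 1" using inv_step[OF I, of 1 y1 1 y1 2] y1 n12 by (simp add: sw_other)
        finally show ?thesis using True xy by (simp add: patt_def)
      next
        case xz: False
        show ?thesis
        proof (cases "y = z")
          case True
          define x1 where "x1 = sw y 1 x"
          have x1: "x1 \<noteq> 1" unfolding x1_def using xy by (metis sw_a sw_inj)
          have "P x y z = P x1 1 1" using inv_step[OF I, of x y z y 1] True by (simp add: x1_def)
          also have "\<dots> = P 2 1 1" using inv_step[OF I, of x1 1 1 x1 2] x1 n12 by (simp add: sw_other)
          finally show ?thesis using True xy xz by (simp add: patt_def)
        next
          case yz: False
          define y1 where "y1 = sw x 1 y"
          define z1 where "z1 = sw x 1 z"
          have y1: "y1 \<noteq> 1" unfolding y1_def using xy by (metis sw_a sw_inj)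
          have z1: "z1 \<noteq> 1" unfolding z1_def using xz by (metis sw_a sw_inj)
          have yz1: "z1 \<noteq> y1" unfolding z1_def y1_def using yz by simp
          have s1: "P x y z = P 1 y1 z1" using inv_step[OF I, of x y z x 1] by (simp add: y1_def z1_def)
          define z2 where "z2 = sw y1 2 z1"
          have sw1: "sw y1 2 1 = 1" using y1 n12 by (simp add: sw_other)
          have z2a: "z2 \<noteq> 1" unfolding z2_def using z1 sw1 by (metis sw_inj)
          have z2b: "z2 \<noteq> 2" unfolding z2_def using yz1 by (metis sw_a sw_inj)
          have s2: "P 1 y1 z1 = P 1 2 z2" using inv_step[OF I, of 1 y1 z1 y1 2] sw1 by (simp add: z2_def)
          have s3: "P 1 2 z2 = P 1 2 3" using inv_step[OF I, of 1 2 z2 z2 3] z2a z2b n12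
            by (simp add: sw_other)
          show ?thesis using s1 s2 s3 xy xz yz by (simp add: patt_def)
        qed
      qed
    qed
  qed
qed

theorem corollaryA2:
  fixes T T' :: rtree3 and mu ta tb tc l :: real and k :: 4
  assumes "mu > 0" and "ta > 0" and "tb > 0" and "tc > 0" and "l > 0"
  shows "polyA (relabel T' (ck_model T mu ta tb tc l)) k = 0
       \<and> polyB (relabel T' (ck_model T mu ta tb tc l)) k = 0"
proof -
  define P where "P = relabel T' (ck_model T mu ta tb tc l)"
  have I: "inv4 P" unfolding P_def by (intro inv_relabel inv_ck_model)
  have "P = patt (P 1 1 1) (P 1 1 2) (P 1 2 1) (P 2 1 1) (P 1 2 3)" by (rule inv_patt[OF I])
  then have "polyA P k = 0 \<and> polyB P k = 0" by (metis polyA_patt polyB_patt)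
  then show ?thesis unfolding P_def .
qed

end
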